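(* Let $(\log\rho_i)_{i\in\mathbb Z}$ be i.i.d. real random variables with $\mathbb P[\log\rho_0>0]>0$ and $\mathbb P[\log\rho_0<0]>0$, let $V$ be the associated random walk defined below, and assume moreover $\liminf_{x\to+\infty}V(x)=-\infty$ almost surely. Let $h>0$. Then: (i) the processes $\big(V[m_1(h)-k]-V[m_1(h)],\ 0\le k\le m_1(h)\big)$ and $\big(V[m_1(h)+k]-V[m_1(h)],\ 0\le k\le T^\uparrow(h)-m_1(h)\big)$ are independent; (ii) the process $\big(V[m_1(h)+k]-V[m_1(h)],\ 0\le k\le T^\uparrow(h)-m_1(h)\big)$ is equal in law to $\big(V(k),\ 0\le k\le T_V([h,+\infty[)\big)$ conditioned on $\{T_V([h,+\infty[)<T_V(]-\infty,0[)\}$.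
   Context: $V(x)=\sum_{k=1}^x\log\rho_k$ for $x>0$, $V(0)=0$, $V(x)=-\sum_{k=x+1}^0\log\rho_k$ for $x<0$. $V^\uparrow(x)=\max_{0\le i\le j\le x}[V(j)-V(i)]$ for $x\in\mathbb N$; $T^\uparrow(h)=\min\{x\ge0:V^\uparrow(x)\ge h\}$; $m_1(h)=\min\{x\ge0:V(x)=\min_{[0,T^\uparrow(h)]}V\}$. For $A\subset\mathbb R$, $T_V(A)=\min\{x\ge1:V(x)\in A\}$. *)

theory Defs
  imports "HOL-Probability.Probability"
begin

text \<open>The potential V associated with a realisation l of (log rho_i)_{i in Z}.\<close>
definition Vpot :: "(int \<Rightarrow> real) \<Rightarrow> int \<Rightarrow> real" where
  "Vpot l x = (if x \<ge> 0 then (\<Sum>k\<in>{1..x}. l k) else - (\<Sum>k\<in>{x+1..0}. l k))"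

definition Vup :: "(int \<Rightarrow> real) \<Rightarrow> nat \<Rightarrow> real" where
  "Vup l x = Max {Vpot l (int j) - Vpot l (int i) | i j. i \<le> j \<and> j \<le> x}"

definition Tup :: "(int \<Rightarrow> real) \<Rightarrow> real \<Rightarrow> enat" where
  "Tup l h = (if \<exists>x. Vup l x \<ge> h then enat (LEAST x. Vup l x \<ge> h) else \<infinity>)"

text \<open>m_1(h) = min{x >= 0 : V(x) = min_{[0,T-up(h)]} V}
  (only meaningful when T-up(h) is finite; arbitrary value 0 otherwise).\<close>
definition m1 :: "(int \<Rightarrow> real) \<Rightarrow> real \<Rightarrow> nat" where
  "m1 l h = (case Tup l h of
      enat t \<Rightarrow> (LEAST x. Vpot l (int x) = Min ((\<lambda>y. Vpot l (int y)) ` {0..t}))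
    | \<infinity> \<Rightarrow> 0)"

definition TV :: "(int \<Rightarrow> real) \<Rightarrow> real set \<Rightarrow> enat" where
  "TV l A = (if \<exists>x::nat. x \<ge> 1 \<and> Vpot l (int x) \<in> A
             then enat (LEAST x::nat. x \<ge> 1 \<and> Vpot l (int x) \<in> A) else \<infinity>)"

definition stopidx :: "enat \<Rightarrow> nat \<Rightarrow> nat" where
  "stopidx T k = (case T of enat n \<Rightarrow> min k n | \<infinity> \<Rightarrow> k)"

text \<open>A path of (possibly infinite) length n, encoded as the pair (n, stopped path).
  The path (Z_k, 0 <= k <= n) is encoded as (n, k |-> Z_{min(k,n)}).\<close>
definition path_space :: "(enat \<times> (nat \<Rightarrow> real)) measure" where
  "path_space = count_space UNIV \<Otimes>\<^sub>M (\<Pi>\<^sub>M k\<in>UNIV. borel)"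

definition pre_min_path :: "(int \<Rightarrow> real) \<Rightarrow> real \<Rightarrow> enat \<times> (nat \<Rightarrow> real)" where
  "pre_min_path l h = (let m = m1 l h in
     (enat m, \<lambda>k. Vpot l (int m - int (stopidx (enat m) k)) - Vpot l (int m)))"

definition post_min_path :: "(int \<Rightarrow> real) \<Rightarrow> real \<Rightarrow> enat \<times> (nat \<Rightarrow> real)" where
  "post_min_path l h = (let m = m1 l h; n = Tup l h - enat m in
     (n, \<lambda>k. Vpot l (int m + int (stopidx n k)) - Vpot l (int m)))"

definition hit_path :: "(int \<Rightarrow> real) \<Rightarrow> real \<Rightarrow> enat \<times> (nat \<Rightarrow> real)" where
  "hit_path l h = (let n = TV l {h..} in (n, \<lambda>k. Vpot l (int (stopidx n k))))"

end

theory Submission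
  imports Defs
begin

definition shl :: "nat \<Rightarrow> (int \<Rightarrow> real) \<Rightarrow> (int \<Rightarrow> real)" where
  "shl a l = (\<lambda>i. l (i + int a))"
definition Gp :: "real \<Rightarrow> nat \<Rightarrow> (int \<Rightarrow> real) \<Rightarrow> bool" where
  "Gp h a l \<longleftrightarrow> (\<forall>k\<in>{..<a}. Vpot l (int a) < Vpot l (int k)) \<and>
     (\<forall>j\<in>{..a}. \<forall>i\<in>{..j}. Vpot l (int j) - Vpot l (int i) < h)"
definition Hp :: "real \<Rightarrow> nat \<Rightarrow> (int \<Rightarrow> real) \<Rightarrow> bool" where
  "Hp h n l \<longleftrightarrow> 1 \<le> n \<and> h \<le> Vpot l (int n) \<and>
     (\<forall>k\<in>{1..<n}. 0 \<le> Vpot l (int k) \<and> Vpot l (int k) < h)"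
definition prep :: "nat \<Rightarrow> (int \<Rightarrow> real) \<Rightarrow> enat \<times> (nat \<Rightarrow> real)" where
  "prep a l = (enat a, \<lambda>k. Vpot l (int (a - min k a)) - Vpot l (int a))"
definition hitp :: "nat \<Rightarrow> (int \<Rightarrow> real) \<Rightarrow> enat \<times> (nat \<Rightarrow> real)" where
  "hitp n l = (enat n, \<lambda>k. Vpot l (int (min k n)))"
definition Rg :: "real \<Rightarrow> (int \<Rightarrow> real) \<Rightarrow> nat \<Rightarrow> bool" where
  "Rg h l x \<longleftrightarrow> (\<exists>j\<le>x. \<exists>i\<le>j. h \<le> Vpot l (int j) - Vpot l (int i))"

lemma Vpot_0[simp]: "Vpot l 0 = 0"
  by (simp add: Vpot_def)

lemma Vpot_Suc: "Vpot l (int (Suc k)) = Vpot l (int k) + l (int k + 1)"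
proof -
  have "{1..int k + 1} = insert (int k + 1) {1..int k}" by auto
  then show ?thesis by (simp add: Vpot_def add.commute)
qed

lemma Vpot_sh: "Vpot (shl a l) (int k) = Vpot l (int (a + k)) - Vpot l (int a)"
proof (induction k)
  case (Suc k)
  have e: "a + Suc k = Suc (a + k)" by simp
  show ?case
    apply (simp only: e Vpot_Suc Suc.IH)
    apply (simp add: shl_def algebra_simps)
    done
qed simp

lemma Vpot_cong: "(\<And>i. i \<in> {1..int x} \<Longrightarrow> l i = l' i) \<Longrightarrow> Vpot l (int x) = Vpot l' (int x)"
  by (simp add: Vpot_def)

lemma Vup_ge: "h \<le> Vup l x \<longleftrightarrow> Rg h l x"
proof -
  let ?S = "{Vpot l (int j) - Vpot l (int i) | i j. i \<le> j \<and> j \<le> x}"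
  have "?S \<subseteq> (\<lambda>(i,j). Vpot l (int j) - Vpot l (int i)) ` ({..x} \<times> {..x})" by auto
  then have fin: "finite ?S" by (rule finite_subset) auto
  have ne: "?S \<noteq> {}" by auto
  show ?thesis unfolding Vup_def Rg_def Max_ge_iff[OF fin ne] by auto
qed

lemma Tup_eq: "Tup l h = (if \<exists>x. Rg h l x then enat (LEAST x. Rg h l x) else \<infinity>)"
  by (simp add: Tup_def Vup_ge)

lemma Rg_mono: "Rg h l x \<Longrightarrow> x \<le> y \<Longrightarrow> Rg h l y"
  unfolding Rg_def by (meson order_trans)

lemma core_fwd:
  assumes h: "h > 0" and T: "Tup l h = enat t"
  shows "m1 l h < t \<and> Gp h (m1 l h) l \<and> Hp h (t - m1 l h) (shl (m1 l h) l)"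
proof -
  define W where "W = (\<lambda>j. Vpot l (int j))"
  have ex: "\<exists>x. Rg h l x" and tdef: "t = (LEAST x. Rg h l x)"
    using T unfolding Tup_eq by (auto split: if_splits)
  have Rt: "Rg h l t" unfolding tdef by (rule LeastI_ex) (rule ex)
  have nR: "\<And>x. x < t \<Longrightarrow> \<not> Rg h l x" using tdef not_less_Least by blast
  define mn where "mn = Min (W ` {0..t})"
  have mdef: "m1 l h = (LEAST x. W x = mn)" unfolding m1_def T mn_def W_def by simp
  have "mn \<in> W ` {0..t}" unfolding mn_def by (intro Min_in) auto
  then obtain x0 where x0: "x0 \<le> t" "W x0 = mn" by auto
  define m where "m = m1 l h"
  have Wm: "W m = mn" unfolding m_def mdef using x0(2) by (rule LeastI)
  have mle: "m \<le> x0" unfolding m_def mdef using x0(2) by (rule Least_le)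
  have nlt: "\<And>x. x < m \<Longrightarrow> W x \<noteq> mn" unfolding m_def mdef using not_less_Least by blast
  have mnle: "\<And>y. y \<le> t \<Longrightarrow> mn \<le> W y" unfolding mn_def by (intro Min_le) auto
  from Rt obtain j i where ji: "j \<le> t" "i \<le> j" "h \<le> W j - W i" unfolding Rg_def W_def by auto
  have "j = t"
  proof (rule ccontr)
    assume "j \<noteq> t" then have "j < t" using ji by auto
    moreover have "Rg h l j" unfolding Rg_def W_def using ji unfolding W_def by auto
    ultimately show False using nR by auto
  qed
  have "W i \<ge> W m" using mnle[of i] ji Wm by auto
  then have hm: "h \<le> W t - W m" using ji \<open>j = t\<close> by auto
  have mt: "m < t" using mle x0 h hm by (cases "m = t") auto
  have G: "Gp h m l"
    unfolding Gp_def
  proof (intro conjI ballI)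
    fix k assume "k \<in> {..<m}"
    then show "Vpot l (int m) < Vpot l (int k)"
      using nlt[of k] mnle[of k] Wm mt unfolding W_def by force
  next
    fix j i assume "j \<in> {..m}" "i \<in> {..j}"
    then show "Vpot l (int j) - Vpot l (int i) < h"
      using nR[of m] mt unfolding Rg_def by force
  qed
  have H: "Hp h (t - m) (shl m l)"
    unfolding Hp_def Vpot_sh
  proof (intro conjI ballI)
    show "1 \<le> t - m" using mt by auto
    show "h \<le> Vpot l (int (m + (t - m))) - Vpot l (int m)" using hm mt unfolding W_def by simp
  next
    fix k assume k: "k \<in> {1..<t - m}"
    show "0 \<le> Vpot l (int (m + k)) - Vpot l (int m)"
      using mnle[of "m+k"] Wm k unfolding W_def by auto
    have nr: "\<not> Rg h l (m + k)" using nR k by auto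
    show "Vpot l (int (m + k)) - Vpot l (int m) < h"
    proof (rule ccontr)
      assume "\<not> Vpot l (int (m + k)) - Vpot l (int m) < h"
      then have "h \<le> Vpot l (int (m + k)) - Vpot l (int m)" by simp
      then have "Rg h l (m + k)" unfolding Rg_def using le_refl le_add1 by blast
      then show False using nr by simp
    qed
  qed
  show ?thesis using mt G H unfolding m_def by simp
qed

lemma core_bwd:
  assumes h: "h > 0" and G: "Gp h a l" and H: "Hp h n (shl a l)"
  shows "Tup l h = enat (a + n) \<and> m1 l h = a"
proof -
  define W where "W = (\<lambda>j. Vpot l (int j))"
  have G1: "\<And>k. k < a \<Longrightarrow> W a < W k" and G2: "\<And>i j. i \<le> j \<Longrightarrow> j \<le> a \<Longrightarrow> W j - W i < h"
    using G unfolding Gp_def W_def by auto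
  have n1: "1 \<le> n" and Hn: "h \<le> W (a + n) - W a"
    and H1: "\<And>k. 1 \<le> k \<Longrightarrow> k < n \<Longrightarrow> 0 \<le> W (a + k) - W a \<and> W (a + k) - W a < h"
    using H unfolding Hp_def Vpot_sh W_def by auto
  have geq: "\<And>y. y \<le> a + n \<Longrightarrow> W a \<le> W y"
  proof -
    fix y assume y: "y \<le> a + n"
    show "W a \<le> W y"
    proof (cases "y < a")
      case True then show ?thesis using G1[of y] by simp
    next
      case False
      define k where "k = y - a"
      have k: "y = a + k" "k \<le> n" using y False unfolding k_def by auto
      show ?thesis
      proof (cases "k = 0")
        case True then show ?thesis using k by simp
      next
        case False
        then show ?thesis using k H1[of k] Hn h by (cases "k = n") auto
      qed
    qed
  qed
  have Rt0: "a \<le> a + n \<and> h \<le> Vpot l (int (a+n)) - Vpot l (int a)" using Hn unfolding W_def by simp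
  have Rt: "Rg h l (a + n)" unfolding Rg_def using Rt0 by blast
  have nR: "\<not> Rg h l x" if x: "x < a + n" for x
  proof
    assume "Rg h l x"
    then obtain j i where ji: "j \<le> x" "i \<le> j" "h \<le> W j - W i" unfolding Rg_def W_def by auto
    show False
    proof (cases "j \<le> a")
      case True then show ?thesis using G2[of i j] ji by simp
    next
      case False
      define k where "k = j - a"
      have k: "j = a + k" "1 \<le> k" "k < n" using ji x False unfolding k_def by auto
      have "W a \<le> W i" using geq[of i] ji x by auto
      then show ?thesis using H1[of k] k ji by auto
    qed
  qed
  have L: "(LEAST x. Rg h l x) = a + n"
  proof (rule Least_equality)
    show "Rg h l (a + n)" by (rule Rt)
    fix y assume "Rg h l y" then show "a + n \<le> y" using nR[of y] by (cases "y < a + n") auto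
  qed
  have T: "Tup l h = enat (a + n)" unfolding Tup_eq using Rt L by auto
  have fin: "finite (W ` {0..a+n})" by simp
  have mem: "W a \<in> W ` {0..a+n}" by simp
  have lb: "\<And>y. y \<in> W ` {0..a+n} \<Longrightarrow> W a \<le> y" using geq by auto
  have mn: "Min (W ` {0..a+n}) = W a" by (rule Min_eqI[OF fin lb mem])
  have "m1 l h = (LEAST x. W x = Min (W ` {0..a+n}))" unfolding m1_def T W_def by simp
  also have "\<dots> = (LEAST x. W x = W a)" unfolding mn ..
  also have "\<dots> = a"
  proof (rule Least_equality)
    fix y assume "W y = W a" then show "a \<le> y" using G1[of y] by (cases "y < a") auto
  qed simp
  finally show ?thesis using T by simp
qed

lemma Hp_TV:
  assumes h: "h > 0" and H: "Hp h n l"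
  shows "TV l {h..} = enat n" "enat n < TV l {..<0}"
proof -
  have n1: "1 \<le> n" and Hn: "h \<le> Vpot l (int n)"
    and H1: "\<And>k. 1 \<le> k \<Longrightarrow> k < n \<Longrightarrow> 0 \<le> Vpot l (int k) \<and> Vpot l (int k) < h"
    using H unfolding Hp_def by auto
  have ex: "\<exists>x::nat. x \<ge> 1 \<and> Vpot l (int x) \<in> {h..}" using n1 Hn by auto
  have "(LEAST x::nat. x \<ge> 1 \<and> Vpot l (int x) \<in> {h..}) = n"
  proof (rule Least_equality)
    show "1 \<le> n \<and> Vpot l (int n) \<in> {h..}" using n1 Hn by simp
    fix y assume y: "1 \<le> y \<and> Vpot l (int y) \<in> {h..}"
    show "n \<le> y"
    proof (rule ccontr)
      assume "\<not> n \<le> y" then have "y < n" by simp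
      then show False using H1[of y] y by auto
    qed
  qed
  then show "TV l {h..} = enat n" unfolding TV_def using ex by simp
  show "enat n < TV l {..<0}"
  proof (cases "\<exists>x::nat. x \<ge> 1 \<and> Vpot l (int x) \<in> {..<0}")
    case True
    define y where "y = (LEAST x::nat. x \<ge> 1 \<and> Vpot l (int x) \<in> {..<0})"
    have y: "y \<ge> 1 \<and> Vpot l (int y) \<in> {..<0}" unfolding y_def by (rule LeastI_ex) (rule True)
    have "n < y"
    proof (rule ccontr)
      assume "\<not> n < y" then have "y \<le> n" by simp
      then show False using H1[of y] y Hn h by (cases "y = n") auto
    qed
    then show ?thesis unfolding TV_def using True y_def by simp
  next
    case False then show ?thesis unfolding TV_def if_not_P[OF False] by simp
  qed
qed

lemma TV_Hp:
  assumes "TV l {h..} < TV l {..<0}"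
  obtains n where "TV l {h..} = enat n" "Hp h n l"
proof -
  have ex: "\<exists>x::nat. x \<ge> 1 \<and> Vpot l (int x) \<in> {h..}"
    using assms unfolding TV_def by (auto split: if_splits)
  define n where "n = (LEAST x::nat. x \<ge> 1 \<and> Vpot l (int x) \<in> {h..})"
  have T: "TV l {h..} = enat n" unfolding TV_def n_def using ex by simp
  have nP: "n \<ge> 1 \<and> Vpot l (int n) \<in> {h..}" unfolding n_def by (rule LeastI_ex) (rule ex)
  have lt: "\<And>k. k < n \<Longrightarrow> \<not> (k \<ge> 1 \<and> Vpot l (int k) \<in> {h..})"
    unfolding n_def using not_less_Least by blast
  have "Hp h n l" unfolding Hp_def
  proof (intro conjI ballI)
    show "1 \<le> n" "h \<le> Vpot l (int n)" using nP by auto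
  next
    fix k assume k: "k \<in> {1..<n}"
    show "Vpot l (int k) < h" using lt[of k] k by auto
    show "0 \<le> Vpot l (int k)"
    proof (rule ccontr)
      assume neg: "\<not> 0 \<le> Vpot l (int k)"
      then have ex2: "\<exists>x::nat. x \<ge> 1 \<and> Vpot l (int x) \<in> {..<0}" using k by auto
      have "(LEAST x::nat. x \<ge> 1 \<and> Vpot l (int x) \<in> {..<0}) \<le> k"
        by (rule Least_le) (use k neg in auto)
      then have "TV l {..<0} \<le> enat k" unfolding TV_def using ex2 by simp
      moreover have "enat n < TV l {..<0}" using assms T by simp
      ultimately have "enat n < enat k" using order.strict_trans2 by blast
      then show False using k by simp
    qed
  qed
  then show ?thesis using that T by blast
qed

lemma Hp_unique: "Hp h n l \<Longrightarrow> Hp h n' l \<Longrightarrow> n = n'"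
  unfolding Hp_def by (metis atLeastLessThan_iff linorder_neqE_nat not_le)

lemma hit_eq: "h > 0 \<Longrightarrow> Hp h n l \<Longrightarrow> hit_path l h = hitp n l"
  using Hp_TV(1)[of h n l] by (simp add: hit_path_def hitp_def stopidx_def)

lemma hit_char:
  assumes h: "h > 0"
  shows "(TV l {h..} < TV l {..<0} \<and> hit_path l h \<in> A) \<longleftrightarrow> (\<exists>n. Hp h n l \<and> hitp n l \<in> A)"
proof
  assume a: "TV l {h..} < TV l {..<0} \<and> hit_path l h \<in> A"
  then obtain n where "Hp h n l" using TV_Hp by blast
  then show "\<exists>n. Hp h n l \<and> hitp n l \<in> A" using a hit_eq[OF h] by auto
next
  assume "\<exists>n. Hp h n l \<and> hitp n l \<in> A"
  then obtain n where n: "Hp h n l" "hitp n l \<in> A" by blast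
  then show "TV l {h..} < TV l {..<0} \<and> hit_path l h \<in> A"
    using Hp_TV[OF h n(1)] hit_eq[OF h n(1)] by simp
qed

lemma pre_eq: "m1 l h = a \<Longrightarrow> pre_min_path l h = prep a l"
  by (simp add: pre_min_path_def prep_def stopidx_def of_nat_diff)

lemma post_eq: "Tup l h = enat (a + n) \<Longrightarrow> m1 l h = a \<Longrightarrow> post_min_path l h = hitp n (shl a l)"
  by (simp add: post_min_path_def hitp_def stopidx_def Vpot_sh)

lemma Tup_inf_paths:
  assumes "Tup l h = \<infinity>"
  shows "pre_min_path l h = (enat 0, \<lambda>k. 0)" "post_min_path l h = (\<infinity>, \<lambda>k. Vpot l (int k))"
  using assms by (simp_all add: pre_min_path_def post_min_path_def m1_def stopidx_def)

lemma main_char: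
  assumes h: "h > 0"
  shows "(Tup l h \<noteq> \<infinity> \<and> m1 l h = a \<and> pre_min_path l h \<in> B \<and> post_min_path l h \<in> A) \<longleftrightarrow>
         (Gp h a l \<and> prep a l \<in> B \<and> (\<exists>n. Hp h n (shl a l) \<and> hitp n (shl a l) \<in> A))"
proof
  assume a: "Tup l h \<noteq> \<infinity> \<and> m1 l h = a \<and> pre_min_path l h \<in> B \<and> post_min_path l h \<in> A"
  then obtain t where t: "Tup l h = enat t" by auto
  note c = core_fwd[OF h t]
  have t2: "Tup l h = enat (a + (t - a))" using t c a by simp
  show "Gp h a l \<and> prep a l \<in> B \<and> (\<exists>n. Hp h n (shl a l) \<and> hitp n (shl a l) \<in> A)"
    using c a pre_eq[of l h a] post_eq[OF t2] by auto
next
  assume a: "Gp h a l \<and> prep a l \<in> B \<and> (\<exists>n. Hp h n (shl a l) \<and> hitp n (shl a l) \<in> A)"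
  then obtain n where n: "Hp h n (shl a l)" "hitp n (shl a l) \<in> A" by blast
  note c = core_bwd[OF h _ n(1)]
  show "Tup l h \<noteq> \<infinity> \<and> m1 l h = a \<and> pre_min_path l h \<in> B \<and> post_min_path l h \<in> A"
    using a c n pre_eq[of l h a] post_eq[of l h a n] by auto
qed

abbreviation NN :: "(int \<Rightarrow> real) measure" where "NN \<equiv> Pi\<^sub>M UNIV (\<lambda>_. borel)"

lemma meas_Vpot[measurable]: "(\<lambda>l. Vpot l x) \<in> borel_measurable NN"
  unfolding Vpot_def by measurable

lemma meas_shl[measurable]: "shl a \<in> measurable NN NN"
  unfolding shl_def by (rule measurable_PiM_single') auto

lemma pred_Gp[measurable]: "Measurable.pred NN (Gp h a)"
  unfolding Gp_def by measurable

lemma pred_Hp[measurable]: "Measurable.pred NN (Hp h n)"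
  unfolding Hp_def by measurable

lemma meas_fun: "(\<And>k. (\<lambda>l. f l k) \<in> borel_measurable NN) \<Longrightarrow> (\<lambda>l. \<lambda>k::nat. f l k) \<in> measurable NN (Pi\<^sub>M UNIV (\<lambda>_. borel))"
  by (rule measurable_PiM_single') auto

lemma meas_prep[measurable]: "prep a \<in> measurable NN path_space"
  unfolding prep_def path_space_def
  by (intro measurable_Pair measurable_const meas_fun) auto

lemma meas_hitp[measurable]: "hitp n \<in> measurable NN path_space"
  unfolding hitp_def path_space_def
  by (intro measurable_Pair measurable_const meas_fun) auto

lemma meas_infp: "(\<lambda>l. (\<infinity>::enat, \<lambda>k. Vpot l (int k))) \<in> measurable NN path_space"
  unfolding path_space_def
  by (intro measurable_Pair measurable_const meas_fun) auto

lemma space_path[simp]: "space path_space = UNIV"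
  by (simp add: path_space_def space_pair_measure space_PiM)

locale rwalk = prob_space M for M :: "'a measure" +
  fixes L :: "int \<Rightarrow> 'a \<Rightarrow> real"
  assumes Lm[measurable]: "\<And>i. L i \<in> borel_measurable M"
    and ind: "prob_space.indep_vars M (\<lambda>_. borel) L UNIV"
    and idd: "\<And>i. distr M borel (L i) = distr M borel (L 0)"
begin

lemma meas_Ls[measurable]: "(\<lambda>\<omega> i. L i \<omega>) \<in> measurable M NN"
  by (rule measurable_PiM_single') auto

abbreviation "D \<equiv> distr M borel (L 0)"

lemma probD: "prob_space D"
  by (rule prob_space_distr) simp

lemma law: "distr M NN (\<lambda>\<omega> i. L i \<omega>) = Pi\<^sub>M UNIV (\<lambda>_. D)"
proof -
  have "distr M NN (\<lambda>x. \<lambda>i\<in>UNIV. L i x) = Pi\<^sub>M UNIV (\<lambda>i. distr M borel (L i))"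
    by (rule iffD1[OF indep_vars_iff_distr_eq_PiM[where I=UNIV and X=L and M'="\<lambda>_. borel"] ind]) auto
  also have "\<dots> = Pi\<^sub>M UNIV (\<lambda>_. D)"
    by (intro PiM_cong refl) (rule idd)
  finally show ?thesis by (simp add: restrict_UNIV)
qed

lemma shift_law: "distr M NN (\<lambda>\<omega> i. L (i + c) \<omega>) = distr M NN (\<lambda>\<omega> i. L i \<omega>)"
proof -
  have sh: "(\<lambda>x i. x (i + c)) \<in> measurable NN NN"
    by (rule measurable_PiM_single') auto
  have "distr M NN (\<lambda>\<omega> i. L (i + c) \<omega>) = distr (distr M NN (\<lambda>\<omega> i. L i \<omega>)) NN (\<lambda>x i. x (i + c))"
    by (subst distr_distr[OF sh meas_Ls]) (simp add: comp_def)
  also have "\<dots> = distr (Pi\<^sub>M UNIV (\<lambda>_. D)) (Pi\<^sub>M UNIV (\<lambda>i. (\<lambda>_. D) (i + c))) (\<lambda>\<omega>. \<lambda>n\<in>UNIV. \<omega> (n + c))"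
    unfolding law by (intro distr_cong) (auto intro!: sets_PiM_cong)
  also have "\<dots> = Pi\<^sub>M UNIV (\<lambda>i. (\<lambda>_. D) (i + c))"
    by (rule distr_PiM_reindex) (auto simp: probD)
  also have "\<dots> = distr M NN (\<lambda>\<omega> i. L i \<omega>)"
    unfolding law by simp
  finally show ?thesis .
qed

lemma shift_prob:
  assumes [measurable]: "Measurable.pred NN P"
  shows "prob {\<omega>\<in>space M. P (shl a (\<lambda>i. L i \<omega>))} = prob {\<omega>\<in>space M. P (\<lambda>i. L i \<omega>)}"
proof -
  have S: "{l\<in>space NN. P l} \<in> sets NN" by measurable
  have m2: "(\<lambda>\<omega> i. L (i + int a) \<omega>) \<in> measurable M NN"
    by (rule measurable_PiM_single') auto
  have "prob {\<omega>\<in>space M. P (shl a (\<lambda>i. L i \<omega>))} = measure (distr M NN (\<lambda>\<omega> i. L (i + int a) \<omega>)) {l\<in>space NN. P l}"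
    by (subst measure_distr[OF m2 S]) (auto simp: shl_def space_PiM intro!: arg_cong[where f=prob])
  also have "\<dots> = measure (distr M NN (\<lambda>\<omega> i. L i \<omega>)) {l\<in>space NN. P l}"
    by (simp only: shift_law)
  also have "\<dots> = prob {\<omega>\<in>space M. P (\<lambda>i. L i \<omega>)}"
    by (subst measure_distr[OF meas_Ls S]) (auto simp: space_PiM intro!: arg_cong[where f=prob])
  finally show ?thesis .
qed

definition ext :: "int set \<Rightarrow> (int \<Rightarrow> real) \<Rightarrow> (int \<Rightarrow> real)" where
  "ext K x = (\<lambda>i. if i \<in> K then x i else 0)"

lemma meas_ext: "ext K \<in> measurable (Pi\<^sub>M K (\<lambda>_. borel)) NN"
  unfolding ext_def
proof (rule measurable_PiM_single')
  fix i :: int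
  show "(\<lambda>\<omega>. if i \<in> K then \<omega> i else 0) \<in> borel_measurable (Pi\<^sub>M K (\<lambda>_. borel))"
    by (cases "i \<in> K") (simp_all add: measurable_component_singleton)
qed auto

lemma indep_blocks:
  assumes [measurable]: "Measurable.pred NN P" "Measurable.pred NN Q"
    and dP: "\<And>l l'. (\<And>i. i \<le> c \<Longrightarrow> l i = l' i) \<Longrightarrow> P l = P l'"
    and dQ: "\<And>l l'. (\<And>i. i > c \<Longrightarrow> l i = l' i) \<Longrightarrow> Q l = Q l'"
  shows "prob {\<omega>\<in>space M. P (\<lambda>i. L i \<omega>) \<and> Q (\<lambda>i. L i \<omega>)} =
         prob {\<omega>\<in>space M. P (\<lambda>i. L i \<omega>)} * prob {\<omega>\<in>space M. Q (\<lambda>i. L i \<omega>)}"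
proof -
  let ?K = "{..c}" and ?J = "{c<..}"
  have iv: "indep_var (Pi\<^sub>M ?K (\<lambda>_. borel)) (\<lambda>\<omega>. restrict (\<lambda>i. L i \<omega>) ?K)
                      (Pi\<^sub>M ?J (\<lambda>_. borel)) (\<lambda>\<omega>. restrict (\<lambda>i. L i \<omega>) ?J)"
    by (rule indep_var_restrict[OF ind]) auto
  let ?Xa = "{x \<in> space (Pi\<^sub>M ?K (\<lambda>_. borel)). P (ext ?K x)}"
  let ?Xb = "{x \<in> space (Pi\<^sub>M ?J (\<lambda>_. borel)). Q (ext ?J x)}"
  have ma: "(\<lambda>x. P (ext ?K x)) \<in> measurable (Pi\<^sub>M ?K (\<lambda>_. borel)) (count_space UNIV)"
    using measurable_compose[OF meas_ext assms(1)] by (simp add: comp_def)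
  have mb: "(\<lambda>x. Q (ext ?J x)) \<in> measurable (Pi\<^sub>M ?J (\<lambda>_. borel)) (count_space UNIV)"
    using measurable_compose[OF meas_ext assms(2)] by (simp add: comp_def)
  have Xa: "?Xa \<in> sets (Pi\<^sub>M ?K (\<lambda>_. borel))" using ma unfolding pred_def by simp
  have Xb: "?Xb \<in> sets (Pi\<^sub>M ?J (\<lambda>_. borel))" using mb unfolding pred_def by simp
  have eP: "P (ext ?K (restrict (\<lambda>i. L i \<omega>) ?K)) = P (\<lambda>i. L i \<omega>)" for \<omega>
    by (rule dP) (simp add: ext_def)
  have eQ: "Q (ext ?J (restrict (\<lambda>i. L i \<omega>) ?J)) = Q (\<lambda>i. L i \<omega>)" for \<omega>
    by (rule dQ) (simp add: ext_def)
  have rK: "restrict (\<lambda>i. L i \<omega>) ?K \<in> space (Pi\<^sub>M ?K (\<lambda>_. borel))" for \<omega> by (simp add: space_PiM)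
  have rJ: "restrict (\<lambda>i. L i \<omega>) ?J \<in> space (Pi\<^sub>M ?J (\<lambda>_. borel))" for \<omega> by (simp add: space_PiM)
  have 1: "{\<omega>\<in>space M. P (\<lambda>i. L i \<omega>) \<and> Q (\<lambda>i. L i \<omega>)} =
    (\<lambda>x. (restrict (\<lambda>i. L i x) ?K, restrict (\<lambda>i. L i x) ?J)) -` (?Xa \<times> ?Xb) \<inter> space M"
    using eP eQ rK rJ by auto
  have 2: "{\<omega>\<in>space M. P (\<lambda>i. L i \<omega>)} = (\<lambda>\<omega>. restrict (\<lambda>i. L i \<omega>) ?K) -` ?Xa \<inter> space M"
    using eP rK by auto
  have 3: "{\<omega>\<in>space M. Q (\<lambda>i. L i \<omega>)} = (\<lambda>\<omega>. restrict (\<lambda>i. L i \<omega>) ?J) -` ?Xb \<inter> space M"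
    using eQ rJ by auto
  show ?thesis unfolding 1 2 3 by (rule indep_varD[OF iv Xa Xb])
qed

end

lemma Vpot_dep_le: "(\<And>i. i \<le> c \<Longrightarrow> l i = l' i) \<Longrightarrow> int j \<le> c \<Longrightarrow> Vpot l (int j) = Vpot l' (int j)"
  by (rule Vpot_cong) auto

lemma Vpot_dep_shl: "(\<And>i. i > int a \<Longrightarrow> l i = l' i) \<Longrightarrow> Vpot (shl a l) (int k) = Vpot (shl a l') (int k)"
  by (rule Vpot_cong) (auto simp: shl_def)

lemma Gp_dep:
  assumes "\<And>i. i \<le> int a \<Longrightarrow> l i = l' i"
  shows "Gp h a l = Gp h a l'"
proof -
  have e: "\<And>j. j \<le> a \<Longrightarrow> Vpot l (int j) = Vpot l' (int j)"
    using Vpot_dep_le[OF assms] by simp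
  show ?thesis unfolding Gp_def
    by (intro conj_cong ball_cong refl) (auto simp: e)
qed

lemma prep_dep:
  assumes "\<And>i. i \<le> int a \<Longrightarrow> l i = l' i"
  shows "prep a l = prep a l'"
proof -
  have e: "\<And>j. j \<le> a \<Longrightarrow> Vpot l (int j) = Vpot l' (int j)"
    using Vpot_dep_le[OF assms] by simp
  have e1: "\<And>k. Vpot l (int (a - min k a)) = Vpot l' (int (a - min k a))" by (rule e) simp
  show ?thesis unfolding prep_def e1 e[OF order_refl] ..
qed

lemma Hp_cong2: "(\<And>k. Vpot l1 (int k) = Vpot l2 (int k)) \<Longrightarrow> Hp h n l1 = Hp h n l2"
  by (simp add: Hp_def)

lemma hitp_cong2: "(\<And>k. Vpot l1 (int k) = Vpot l2 (int k)) \<Longrightarrow> hitp n l1 = hitp n l2"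
  by (simp add: hitp_def)

lemma Tup_fin_iff:
  assumes h: "h > 0"
  shows "Tup l h \<noteq> \<infinity> \<longleftrightarrow> (\<exists>a n. Gp h a l \<and> Hp h n (shl a l))"
proof
  assume "Tup l h \<noteq> \<infinity>"
  then obtain t where "Tup l h = enat t" by auto
  from core_fwd[OF h this] show "\<exists>a n. Gp h a l \<and> Hp h n (shl a l)" by blast
next
  assume "\<exists>a n. Gp h a l \<and> Hp h n (shl a l)"
  then obtain a n where "Gp h a l" "Hp h n (shl a l)" by blast
  from core_bwd[OF h this] show "Tup l h \<noteq> \<infinity>" by simp
qed

context rwalk
begin

lemma meas_piece:
  assumes C: "countable C" "\<And>\<Omega>. \<Omega> \<in> C \<Longrightarrow> \<Omega> \<in> sets M" "space M \<subseteq> \<Union>C"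
    and f: "\<And>\<Omega>. \<Omega> \<in> C \<Longrightarrow> \<exists>g. g \<in> measurable M N' \<and> (\<forall>\<omega>\<in>\<Omega>. f \<omega> = g \<omega>)"
  shows "f \<in> measurable M N'"
proof (rule measurable_piecewise_restrict[OF C(1)])
  fix \<Omega> assume "\<Omega> \<in> C"
  then show "\<Omega> \<inter> space M \<in> sets M" using C(2) by auto
next
  show "space M \<subseteq> \<Union>C" by (rule C(3))
next
  fix \<Omega> assume om: "\<Omega> \<in> C"
  then obtain g where g: "g \<in> measurable M N'" "\<forall>\<omega>\<in>\<Omega>. f \<omega> = g \<omega>" using f by blast
  have "g \<in> measurable (restrict_space M \<Omega>) N'" by (rule measurable_restrict_space1[OF g(1)])
  then show "f \<in> measurable (restrict_space M \<Omega>) N'"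
    by (rule measurable_cong[THEN iffD2, rotated]) (use g(2) in \<open>auto simp: space_restrict_space\<close>)
qed

definition Om :: "real \<Rightarrow> nat \<times> nat \<Rightarrow> 'a set" where
  "Om h p = {\<omega>\<in>space M. Gp h (fst p) (\<lambda>i. L i \<omega>) \<and> Hp h (snd p) (shl (fst p) (\<lambda>i. L i \<omega>))}"
definition Zi :: "real \<Rightarrow> 'a set" where
  "Zi h = {\<omega>\<in>space M. \<forall>a n. \<not> (Gp h a (\<lambda>i. L i \<omega>) \<and> Hp h n (shl a (\<lambda>i. L i \<omega>)))}"

lemma Om_sets: "Om h p \<in> sets M" unfolding Om_def by measurable
lemma Zi_sets: "Zi h \<in> sets M" unfolding Zi_def by measurable

lemma paths_meas:
  assumes h: "h > 0"
  shows "(\<lambda>\<omega>. pre_min_path (\<lambda>i. L i \<omega>) h) \<in> measurable M path_space"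
    "(\<lambda>\<omega>. post_min_path (\<lambda>i. L i \<omega>) h) \<in> measurable M path_space"
proof -
  let ?C = "range (Om h) \<union> {Zi h}"
  have cC: "countable ?C" by simp
  have sC: "\<And>\<Omega>. \<Omega> \<in> ?C \<Longrightarrow> \<Omega> \<in> sets M" using Om_sets Zi_sets by auto
  have uC: "space M \<subseteq> \<Union>?C"
  proof
    fix \<omega> assume w: "\<omega> \<in> space M"
    show "\<omega> \<in> \<Union>?C"
    proof (cases "\<exists>a n. Gp h a (\<lambda>i. L i \<omega>) \<and> Hp h n (shl a (\<lambda>i. L i \<omega>))")
      case True
      then obtain a n where "Gp h a (\<lambda>i. L i \<omega>) \<and> Hp h n (shl a (\<lambda>i. L i \<omega>))" by blast
      then have "\<omega> \<in> Om h (a, n)" using w by (simp add: Om_def)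
      then show ?thesis by blast
    next
      case False
      then have "\<omega> \<in> Zi h" using w by (simp add: Zi_def)
      then show ?thesis by blast
    qed
  qed
  have onOm: "pre_min_path (\<lambda>i. L i \<omega>) h = prep a (\<lambda>i. L i \<omega>) \<and>
              post_min_path (\<lambda>i. L i \<omega>) h = hitp n (shl a (\<lambda>i. L i \<omega>))"
    if "\<omega> \<in> Om h (a, n)" for \<omega> a n
  proof -
    have "Gp h a (\<lambda>i. L i \<omega>)" "Hp h n (shl a (\<lambda>i. L i \<omega>))" using that by (auto simp: Om_def)
    note c = core_bwd[OF h this]
    show ?thesis using pre_eq[OF c[THEN conjunct2]] post_eq[OF c[THEN conjunct1] c[THEN conjunct2]] by simp
  qed
  have onZi: "Tup (\<lambda>i. L i \<omega>) h = \<infinity>" if "\<omega> \<in> Zi h" for \<omega>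
    using that Tup_fin_iff[OF h, of "\<lambda>i. L i \<omega>"] by (auto simp: Zi_def)
  show "(\<lambda>\<omega>. pre_min_path (\<lambda>i. L i \<omega>) h) \<in> measurable M path_space"
  proof (rule meas_piece[OF cC sC uC])
    fix \<Omega> assume "\<Omega> \<in> ?C"
    then show "\<exists>g. g \<in> measurable M path_space \<and> (\<forall>\<omega>\<in>\<Omega>. pre_min_path (\<lambda>i. L i \<omega>) h = g \<omega>)"
    proof
      assume "\<Omega> \<in> range (Om h)"
      then obtain a n where "\<Omega> = Om h (a, n)" by auto
      then show ?thesis using onOm by (intro exI[of _ "\<lambda>\<omega>. prep a (\<lambda>i. L i \<omega>)"]) auto
    next
      assume "\<Omega> \<in> {Zi h}"
      then show ?thesis using onZi Tup_inf_paths(1)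
        by (intro exI[of _ "\<lambda>\<omega>. (enat 0, \<lambda>k. 0)"]) (auto intro!: measurable_const)
    qed
  qed
  show "(\<lambda>\<omega>. post_min_path (\<lambda>i. L i \<omega>) h) \<in> measurable M path_space"
  proof (rule meas_piece[OF cC sC uC])
    fix \<Omega> assume "\<Omega> \<in> ?C"
    then show "\<exists>g. g \<in> measurable M path_space \<and> (\<forall>\<omega>\<in>\<Omega>. post_min_path (\<lambda>i. L i \<omega>) h = g \<omega>)"
    proof
      assume "\<Omega> \<in> range (Om h)"
      then obtain a n where "\<Omega> = Om h (a, n)" by auto
      then show ?thesis using onOm by (intro exI[of _ "\<lambda>\<omega>. hitp n (shl a (\<lambda>i. L i \<omega>))"]) auto
    next
      assume "\<Omega> \<in> {Zi h}"
      have m: "(\<lambda>\<omega>. (\<infinity>::enat, \<lambda>k. Vpot (\<lambda>i. L i \<omega>) (int k))) \<in> measurable M path_space"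
        using measurable_compose[OF meas_Ls meas_infp] by (simp add: comp_def)
      show ?thesis using \<open>\<Omega> \<in> {Zi h}\<close> onZi Tup_inf_paths(2) m
        by (intro exI[of _ "\<lambda>\<omega>. (\<infinity>::enat, \<lambda>k. Vpot (\<lambda>i. L i \<omega>) (int k))"]) auto
    qed
  qed
qed

end

context rwalk
begin

definition gg :: "real \<Rightarrow> nat \<Rightarrow> (enat \<times> (nat \<Rightarrow> real)) set \<Rightarrow> real" where
  "gg h a B = prob {\<omega>\<in>space M. Gp h a (\<lambda>i. L i \<omega>) \<and> prep a (\<lambda>i. L i \<omega>) \<in> B}"
definition cc :: "real \<Rightarrow> (enat \<times> (nat \<Rightarrow> real)) set \<Rightarrow> real" where
  "cc h A = prob {\<omega>\<in>space M. \<exists>n. Hp h n (\<lambda>i. L i \<omega>) \<and> hitp n (\<lambda>i. L i \<omega>) \<in> A}"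

lemma decomp:
  assumes h: "h > 0" and AEf: "AE \<omega> in M. Tup (\<lambda>i. L i \<omega>) h \<noteq> \<infinity>"
    and B[measurable]: "B \<in> sets path_space" and A[measurable]: "A \<in> sets path_space"
  shows "(\<lambda>a. gg h a B * cc h A) sums
    prob {\<omega>\<in>space M. pre_min_path (\<lambda>i. L i \<omega>) h \<in> B \<and> post_min_path (\<lambda>i. L i \<omega>) h \<in> A}"
proof -
  note [measurable] = paths_meas[OF h]
  define F where "F a = {\<omega>\<in>space M. (Gp h a (\<lambda>i. L i \<omega>) \<and> prep a (\<lambda>i. L i \<omega>) \<in> B) \<and>
      (\<exists>n. Hp h n (shl a (\<lambda>i. L i \<omega>)) \<and> hitp n (shl a (\<lambda>i. L i \<omega>)) \<in> A)}" for a
  have Fs: "F a \<in> sets M" for a unfolding F_def by measurable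
  have Fchar: "\<omega> \<in> F a \<longleftrightarrow> \<omega> \<in> space M \<and> (Tup (\<lambda>i. L i \<omega>) h \<noteq> \<infinity> \<and> m1 (\<lambda>i. L i \<omega>) h = a \<and>
      pre_min_path (\<lambda>i. L i \<omega>) h \<in> B \<and> post_min_path (\<lambda>i. L i \<omega>) h \<in> A)" for \<omega> a
    unfolding F_def using main_char[OF h, of "\<lambda>i. L i \<omega>" a B A] by auto
  have disj: "disjoint_family F"
    unfolding disjoint_family_on_def
  proof (intro ballI impI)
    fix a b :: nat assume "a \<noteq> b"
    then show "F a \<inter> F b = {}" by (auto simp: Fchar)
  qed
  have U: "(\<Union>a. F a) = {\<omega>\<in>space M. Tup (\<lambda>i. L i \<omega>) h \<noteq> \<infinity> \<and>
      pre_min_path (\<lambda>i. L i \<omega>) h \<in> B \<and> post_min_path (\<lambda>i. L i \<omega>) h \<in> A}"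
    by (auto simp: Fchar)
  have pF: "prob (F a) = gg h a B * cc h A" for a
  proof -
    have dP: "(Gp h a l \<and> prep a l \<in> B) = (Gp h a l' \<and> prep a l' \<in> B)"
      if "\<And>i. i \<le> int a \<Longrightarrow> l i = l' i" for l l'
      using Gp_dep[OF that] prep_dep[OF that] by simp
    have dQ: "(\<exists>n. Hp h n (shl a l) \<and> hitp n (shl a l) \<in> A) = (\<exists>n. Hp h n (shl a l') \<and> hitp n (shl a l') \<in> A)"
      if "\<And>i. i > int a \<Longrightarrow> l i = l' i" for l l'
    proof -
      have e: "\<And>k. Vpot (shl a l) (int k) = Vpot (shl a l') (int k)" by (rule Vpot_dep_shl) (rule that)
      show ?thesis by (simp only: Hp_cong2[OF e] hitp_cong2[OF e])
    qed
    have "prob (F a) = prob {\<omega>\<in>space M. Gp h a (\<lambda>i. L i \<omega>) \<and> prep a (\<lambda>i. L i \<omega>) \<in> B} *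
        prob {\<omega>\<in>space M. \<exists>n. Hp h n (shl a (\<lambda>i. L i \<omega>)) \<and> hitp n (shl a (\<lambda>i. L i \<omega>)) \<in> A}"
      unfolding F_def
      by (rule indep_blocks[where c="int a" and P="\<lambda>l. Gp h a l \<and> prep a l \<in> B"
          and Q="\<lambda>l. \<exists>n. Hp h n (shl a l) \<and> hitp n (shl a l) \<in> A"])
         (measurable, measurable, rule dP, assumption, rule dQ, assumption)
    also have "prob {\<omega>\<in>space M. \<exists>n. Hp h n (shl a (\<lambda>i. L i \<omega>)) \<and> hitp n (shl a (\<lambda>i. L i \<omega>)) \<in> A} = cc h A"
      unfolding cc_def by (rule shift_prob[where P="\<lambda>l. \<exists>n. Hp h n l \<and> hitp n l \<in> A"]) measurable
    finally show ?thesis unfolding gg_def .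
  qed
  have "(\<lambda>a. prob (F a)) sums prob (\<Union>a. F a)"
    by (rule measure_UNION) (use Fs disj in \<open>auto simp: emeasure_eq_measure\<close>)
  moreover have "prob (\<Union>a. F a) = prob {\<omega>\<in>space M. pre_min_path (\<lambda>i. L i \<omega>) h \<in> B \<and> post_min_path (\<lambda>i. L i \<omega>) h \<in> A}"
  proof (rule measure_eq_AE)
    show "AE x in M. (x \<in> (\<Union>a. F a)) = (x \<in> {\<omega>\<in>space M. pre_min_path (\<lambda>i. L i \<omega>) h \<in> B \<and> post_min_path (\<lambda>i. L i \<omega>) h \<in> A})"
      by (rule AE_mp[OF AEf]) (auto intro!: AE_I2 simp: U)
    show "(\<Union>a. F a) \<in> sets M" using Fs by auto
    show "{\<omega>\<in>space M. pre_min_path (\<lambda>i. L i \<omega>) h \<in> B \<and> post_min_path (\<lambda>i. L i \<omega>) h \<in> A} \<in> sets M"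
      by measurable
  qed
  ultimately show ?thesis using pF by simp
qed

end

definition blk :: "real \<Rightarrow> nat \<Rightarrow> (int \<Rightarrow> real) \<Rightarrow> bool" where
  "blk e K l \<longleftrightarrow> (\<forall>i\<in>{1..int K}. e < l i)"

lemma pred_blk[measurable]: "Measurable.pred NN (blk e K)"
  unfolding blk_def by measurable

lemma blk_rise:
  assumes b: "blk e K (shl s l)" and hK: "h \<le> real K * e"
  shows "Rg h l (s + K)"
proof -
  have "(\<Sum>i\<in>{1..int K}. e) \<le> (\<Sum>i\<in>{1..int K}. shl s l i)"
    by (rule sum_mono) (use b in \<open>auto simp: blk_def less_imp_le\<close>)
  then have "real K * e \<le> Vpot (shl s l) (int K)" by (simp add: Vpot_def)
  then have "h \<le> Vpot l (int (s + K)) - Vpot l (int s)" using hK by (simp add: Vpot_sh)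
  then show ?thesis unfolding Rg_def by (intro exI[of _ "s + K"] conjI exI[of _ s]) simp_all
qed

context rwalk
begin

lemma prob_Li: "prob {\<omega>\<in>space M. e < L i \<omega>} = prob {\<omega>\<in>space M. e < L 0 \<omega>}"
proof -
  have "prob {\<omega>\<in>space M. e < L i \<omega>} = measure (distr M borel (L i)) {e<..}"
    by (subst measure_distr) (auto intro!: arg_cong[where f=prob])
  also have "\<dots> = measure (distr M borel (L 0)) {e<..}"
    by (subst idd) (rule refl)
  also have "\<dots> = prob {\<omega>\<in>space M. e < L 0 \<omega>}"
    by (subst measure_distr) (auto intro!: arg_cong[where f=prob])
  finally show ?thesis .
qed

lemma blk_prob: "prob {\<omega>\<in>space M. blk e m (\<lambda>i. L i \<omega>)} = (prob {\<omega>\<in>space M. e < L 0 \<omega>}) ^ m"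
proof (induction m)
  case 0
  have "{\<omega>\<in>space M. blk e 0 (\<lambda>i. L i \<omega>)} = space M" by (auto simp: blk_def)
  then show ?case by (simp add: prob_space)
next
  case (Suc m)
  have iv: "\<And>x::int. x \<in> {1..int (Suc m)} \<longleftrightarrow> x \<in> {1..int m} \<or> x = int m + 1" by auto
  have seq: "{\<omega>\<in>space M. blk e (Suc m) (\<lambda>i. L i \<omega>)} =
        {\<omega>\<in>space M. blk e m (\<lambda>i. L i \<omega>) \<and> e < L (int m + 1) \<omega>}"
    unfolding blk_def Ball_def iv by blast
  have "prob {\<omega>\<in>space M. blk e (Suc m) (\<lambda>i. L i \<omega>)} =
      prob {\<omega>\<in>space M. blk e m (\<lambda>i. L i \<omega>)} * prob {\<omega>\<in>space M. e < L (int m + 1) \<omega>}"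
  proof -
    have dP: "blk e m l = blk e m l'" if eq: "\<And>i. i \<le> int m \<Longrightarrow> l i = l' i" for l l'
    proof -
      have "l i = l' i" if "i \<in> {1..int m}" for i using that by (intro eq) auto
      then show ?thesis unfolding blk_def by auto
    qed
    have "prob {\<omega>\<in>space M. blk e m (\<lambda>i. L i \<omega>) \<and> e < L (int m + 1) \<omega>} =
      prob {\<omega>\<in>space M. blk e m (\<lambda>i. L i \<omega>)} * prob {\<omega>\<in>space M. e < L (int m + 1) \<omega>}"
      by (rule indep_blocks[where c="int m" and P="blk e m" and Q="\<lambda>l. e < l (int m + 1)"])
        (measurable, measurable, rule dP, assumption, simp)
    then show ?thesis using seq by simp
  qed
  then show ?case using Suc.IH prob_Li[of e "int m + 1"] by simp
qed

lemma dn_prob: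
  "prob {\<omega>\<in>space M. \<forall>j<J. \<not> blk e K (shl (j*K) (\<lambda>i. L i \<omega>))} =
     (1 - prob {\<omega>\<in>space M. blk e K (\<lambda>i. L i \<omega>)}) ^ J"
proof (induction J)
  case 0
  then show ?case by (simp add: prob_space)
next
  case (Suc J)
  have s: "{\<omega>\<in>space M. \<forall>j<Suc J. \<not> blk e K (shl (j*K) (\<lambda>i. L i \<omega>))} =
     {\<omega>\<in>space M. (\<forall>j<J. \<not> blk e K (shl (j*K) (\<lambda>i. L i \<omega>))) \<and> \<not> blk e K (shl (J*K) (\<lambda>i. L i \<omega>))}"
    by (auto simp: less_Suc_eq)
  have dP: "(\<forall>j<J. \<not> blk e K (shl (j*K) l)) = (\<forall>j<J. \<not> blk e K (shl (j*K) l'))"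
    if eq: "\<And>i. i \<le> int (J*K) \<Longrightarrow> l i = l' i" for l l'
  proof -
    have "blk e K (shl (j*K) l) = blk e K (shl (j*K) l')" if j: "j < J" for j
    proof -
      have "j * K + K \<le> J * K" using j by (metis Suc_leI add.commute mult_Suc mult_le_mono1)
      then have le: "int (j*K) + int K \<le> int (J*K)" by linarith
      have "l (i + int (j*K)) = l' (i + int (j*K))" if "i \<in> {1..int K}" for i
        using that le by (intro eq) auto
      then show ?thesis unfolding blk_def shl_def by auto
    qed
    then show ?thesis by auto
  qed
  have dQ: "(\<not> blk e K (shl (J*K) l)) = (\<not> blk e K (shl (J*K) l'))"
    if eq: "\<And>i. i > int (J*K) \<Longrightarrow> l i = l' i" for l l'
  proof -
    have "l (i + int (J*K)) = l' (i + int (J*K))" if "i \<in> {1..int K}" for i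
      using that by (intro eq) auto
    then show ?thesis unfolding blk_def shl_def by auto
  qed
  have "prob {\<omega>\<in>space M. \<forall>j<Suc J. \<not> blk e K (shl (j*K) (\<lambda>i. L i \<omega>))} =
     prob {\<omega>\<in>space M. \<forall>j<J. \<not> blk e K (shl (j*K) (\<lambda>i. L i \<omega>))} *
     prob {\<omega>\<in>space M. \<not> blk e K (shl (J*K) (\<lambda>i. L i \<omega>))}"
    unfolding s
    by (rule indep_blocks[where c="int (J*K)" and P="\<lambda>l. \<forall>j<J. \<not> blk e K (shl (j*K) l)"
          and Q="\<lambda>l. \<not> blk e K (shl (J*K) l)"])
       (measurable, measurable, rule dP, assumption, rule dQ, assumption)
  also have "prob {\<omega>\<in>space M. \<not> blk e K (shl (J*K) (\<lambda>i. L i \<omega>))} = prob {\<omega>\<in>space M. \<not> blk e K (\<lambda>i. L i \<omega>)}"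
    by (rule shift_prob[where P="\<lambda>l. \<not> blk e K l"]) measurable
  also have "{\<omega>\<in>space M. \<not> blk e K (\<lambda>i. L i \<omega>)} = space M - {\<omega>\<in>space M. blk e K (\<lambda>i. L i \<omega>)}" by auto
  also have "prob \<dots> = 1 - prob {\<omega>\<in>space M. blk e K (\<lambda>i. L i \<omega>)}"
    by (rule prob_compl) measurable
  finally show ?case using Suc.IH by simp
qed

lemma Tup_AE:
  assumes h: "h > 0" and pos: "0 < prob {\<omega>\<in>space M. 0 < L 0 \<omega>}"
  shows "AE \<omega> in M. Tup (\<lambda>i. L i \<omega>) h \<noteq> \<infinity>"
proof -
  obtain e where e: "e > 0" "0 < prob {\<omega>\<in>space M. e < L 0 \<omega>}"
  proof (rule ccontr)
    assume nt: "\<not> thesis"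
    have z: "prob {\<omega>\<in>space M. inverse (real (Suc n)) < L 0 \<omega>} = 0" for n
    proof -
      have "\<not> 0 < prob {\<omega>\<in>space M. inverse (real (Suc n)) < L 0 \<omega>}"
        using that nt by (metis inverse_positive_iff_positive of_nat_0_less_iff zero_less_Suc)
      then show ?thesis using measure_nonneg[of M] by (meson antisym not_le)
    qed
    have "AE \<omega> in M. \<not> inverse (real (Suc n)) < L 0 \<omega>" for n
      using z[of n] by (subst (asm) prob_Collect_eq_0) measurable
    then have "AE \<omega> in M. \<forall>n. \<not> inverse (real (Suc n)) < L 0 \<omega>" by (simp add: AE_all_countable)
    then have "AE \<omega> in M. \<not> 0 < L 0 \<omega>"
    proof (rule AE_mp, intro AE_I2 impI)
      fix \<omega> assume a: "\<forall>n. \<not> inverse (real (Suc n)) < L 0 \<omega>"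
      show "\<not> 0 < L 0 \<omega>"
      proof
        assume "0 < L 0 \<omega>"
        then obtain n :: nat where "n > 0" "inverse (real n) < L 0 \<omega>" using ex_inverse_of_nat_less by blast
        then show False using a[rule_format, of "n - 1"] by simp
      qed
    qed
    then have "prob {\<omega>\<in>space M. 0 < L 0 \<omega>} = 0" by (subst prob_Collect_eq_0) measurable
    then show False using pos by simp
  qed
  define K where "K = nat \<lceil>h / e\<rceil> + 1"
  have hK: "h \<le> real K * e"
  proof -
    have "h / e \<le> real (nat \<lceil>h / e\<rceil>)" by (rule real_nat_ceiling_ge)
    also have "\<dots> \<le> real K" unfolding K_def by simp
    finally show ?thesis using e(1) by (simp add: pos_divide_le_eq)
  qed
  define q where "q = prob {\<omega>\<in>space M. blk e K (\<lambda>i. L i \<omega>)}"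
  have q0: "q > 0" unfolding q_def blk_prob using e(2) by simp
  have q1: "q \<le> 1" unfolding q_def by (rule prob_le_1)
  define Z where "Z = {\<omega>\<in>space M. \<forall>j. \<not> blk e K (shl (j*K) (\<lambda>i. L i \<omega>))}"
  have Zs: "Z \<in> sets M" unfolding Z_def by measurable
  have Zle: "prob Z \<le> (1 - q) ^ J" for J
  proof -
    have "prob Z \<le> prob {\<omega>\<in>space M. \<forall>j<J. \<not> blk e K (shl (j*K) (\<lambda>i. L i \<omega>))}"
      by (rule finite_measure_mono) (auto simp: Z_def)
    then show ?thesis unfolding dn_prob q_def .
  qed
  have lim: "(\<lambda>J. (1 - q) ^ J) \<longlonglongrightarrow> 0" by (rule LIMSEQ_power_zero) (use q0 q1 in auto)
  have "prob Z \<le> 0" by (rule LIMSEQ_le_const[OF lim]) (use Zle in auto)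
  then have "prob Z = 0" using measure_nonneg[of M Z] by simp
  then have "AE \<omega> in M. \<not> (\<forall>j. \<not> blk e K (shl (j*K) (\<lambda>i. L i \<omega>)))"
    unfolding Z_def by (subst (asm) prob_Collect_eq_0) measurable
  then show ?thesis
  proof (rule AE_mp, intro AE_I2 impI)
    fix \<omega> assume "\<not> (\<forall>j. \<not> blk e K (shl (j*K) (\<lambda>i. L i \<omega>)))"
    then obtain j where "blk e K (shl (j*K) (\<lambda>i. L i \<omega>))" by blast
    then have "Rg h (\<lambda>i. L i \<omega>) (j*K + K)" using blk_rise hK by blast
    then show "Tup (\<lambda>i. L i \<omega>) h \<noteq> \<infinity>" unfolding Tup_eq by auto
  qed
qed

end

lemma (in prob_space) indep_var_from_prod:
  assumes X: "random_variable S X" and Y: "random_variable T Y"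
    and prod: "\<And>A B. A \<in> sets S \<Longrightarrow> B \<in> sets T \<Longrightarrow>
      prob {\<omega>\<in>space M. X \<omega> \<in> A \<and> Y \<omega> \<in> B} = prob {\<omega>\<in>space M. X \<omega> \<in> A} * prob {\<omega>\<in>space M. Y \<omega> \<in> B}"
  shows "indep_var S X T Y"
proof -
  let ?F1 = "{X -` A \<inter> space M | A. A \<in> sets S}"
  let ?F2 = "{Y -` A \<inter> space M | A. A \<in> sets T}"
  have fe: "(\<lambda>i. {case_bool X Y i -` A \<inter> space M | A. A \<in> sets (case_bool S T i)}) = case_bool ?F1 ?F2"
    by (rule ext) (simp split: bool.split)
  have "indep_set ?F1 ?F2"
  proof (rule indep_setI)
    show "?F1 \<subseteq> events" using X by (auto intro: measurable_sets)
    show "?F2 \<subseteq> events" using Y by (auto intro: measurable_sets)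
  next
    fix a b assume "a \<in> ?F1" "b \<in> ?F2"
    then obtain A B where AB: "a = X -` A \<inter> space M" "A \<in> sets S" "b = Y -` B \<inter> space M" "B \<in> sets T" by blast
    have "a \<inter> b = {\<omega>\<in>space M. X \<omega> \<in> A \<and> Y \<omega> \<in> B}" "a = {\<omega>\<in>space M. X \<omega> \<in> A}" "b = {\<omega>\<in>space M. Y \<omega> \<in> B}"
      using AB by auto
    then show "prob (a \<inter> b) = prob a * prob b" using prod[OF AB(2) AB(4)] by simp
  qed
  then show ?thesis
    unfolding indep_var_def indep_vars_def2 fe indep_set_def[symmetric]
    using X Y by (auto split: bool.split)
qed

theorem proposition5p2:
  fixes M :: "'a measure" and L :: "int \<Rightarrow> 'a \<Rightarrow> real" and h :: real
  assumes "prob_space M"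
    and "\<And>i. L i \<in> borel_measurable M"
    and "prob_space.indep_vars M (\<lambda>_. borel) L UNIV"
    and "\<And>i. distr M borel (L i) = distr M borel (L 0)"
    and "\<P>(\<omega> in M. L 0 \<omega> > 0) > 0"
    and "\<P>(\<omega> in M. L 0 \<omega> < 0) > 0"
    and "AE \<omega> in M. liminf (\<lambda>x::nat. ereal (Vpot (\<lambda>i. L i \<omega>) (int x))) = -\<infinity>"
    and "h > 0"
  shows "prob_space.indep_var M
           path_space (\<lambda>\<omega>. pre_min_path (\<lambda>i. L i \<omega>) h)
           path_space (\<lambda>\<omega>. post_min_path (\<lambda>i. L i \<omega>) h)
       \<and> (\<forall>A \<in> sets path_space.
            \<P>(\<omega> in M. post_min_path (\<lambda>i. L i \<omega>) h \<in> A)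
          = cond_prob M (\<lambda>\<omega>. hit_path (\<lambda>i. L i \<omega>) h \<in> A)
              (\<lambda>\<omega>. TV (\<lambda>i. L i \<omega>) {h..} < TV (\<lambda>i. L i \<omega>) {..<0}))"
proof -
  have rw: "rwalk M L"
    unfolding rwalk_def rwalk_axioms_def using assms(1-4) by auto
  interpret rwalk M L by (rule rw)
  have h: "h > 0" by (rule assms(8))
  have AEf: "AE \<omega> in M. Tup (\<lambda>i. L i \<omega>) h \<noteq> \<infinity>"
    by (rule Tup_AE[OF h]) (use assms(5) in simp)
  note pm[measurable] = paths_meas[OF h]
  define pre where "pre = (\<lambda>\<omega>. pre_min_path (\<lambda>i. L i \<omega>) h)"
  define post where "post = (\<lambda>\<omega>. post_min_path (\<lambda>i. L i \<omega>) h)"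
  define P where "P B A = prob {\<omega>\<in>space M. pre \<omega> \<in> B \<and> post \<omega> \<in> A}" for B A
  have dec: "(\<lambda>a. gg h a B * cc h A) sums P B A" if "B \<in> sets path_space" "A \<in> sets path_space" for B A
    unfolding P_def pre_def post_def by (rule decomp[OF h AEf that])
  have U: "UNIV \<in> sets path_space" using sets.top[of path_space] by simp
  define c0 where "c0 = cc h UNIV"
  have P11: "P UNIV UNIV = 1" unfolding P_def by (simp add: prob_space)
  have c0: "c0 \<noteq> 0"
  proof
    assume "c0 = 0"
    then have "(\<lambda>a. gg h a UNIV * cc h UNIV) sums 0" unfolding c0_def by simp
    with dec[OF U U] P11 show False using sums_unique2 by fastforce
  qed
  have gsum: "(\<lambda>a. gg h a B) sums (P B UNIV / c0)" if B: "B \<in> sets path_space" for B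
  proof -
    have "(\<lambda>a. gg h a B * c0 / c0) sums (P B UNIV / c0)"
      using sums_divide[OF dec[OF B U, folded c0_def], of c0] .
    then show ?thesis using c0 by simp
  qed
  have PBA: "P B A = P B UNIV / c0 * cc h A" if B: "B \<in> sets path_space" and A: "A \<in> sets path_space" for B A
    using sums_unique2[OF dec[OF B A] sums_mult2[OF gsum[OF B], of "cc h A"]] .
  have P1A: "P UNIV A = cc h A / c0" if A: "A \<in> sets path_space" for A
    using PBA[OF U A] P11 by simp
  have post_eq: "prob {\<omega>\<in>space M. post \<omega> \<in> A} = P UNIV A" for A
    unfolding P_def by simp
  have pre_eq: "prob {\<omega>\<in>space M. pre \<omega> \<in> B} = P B UNIV" for B
    unfolding P_def by simp
  have indep: "indep_var path_space pre path_space post"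
  proof (rule indep_var_from_prod)
    show "random_variable path_space pre" "random_variable path_space post"
      unfolding pre_def post_def by measurable
  next
    fix B A assume B: "B \<in> sets path_space" and A: "A \<in> sets path_space"
    show "prob {\<omega>\<in>space M. pre \<omega> \<in> B \<and> post \<omega> \<in> A} = prob {\<omega>\<in>space M. pre \<omega> \<in> B} * prob {\<omega>\<in>space M. post \<omega> \<in> A}"
      using PBA[OF B A] P1A[OF A] unfolding post_eq pre_eq P_def[symmetric] by simp
  qed
  have hitA: "{\<omega>\<in>space M. hit_path (\<lambda>i. L i \<omega>) h \<in> A \<and> TV (\<lambda>i. L i \<omega>) {h..} < TV (\<lambda>i. L i \<omega>) {..<0}} =
      {\<omega>\<in>space M. \<exists>n. Hp h n (\<lambda>i. L i \<omega>) \<and> hitp n (\<lambda>i. L i \<omega>) \<in> A}" for A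
    using hit_char[OF h] by blast
  have cond: "\<P>(\<omega> in M. post_min_path (\<lambda>i. L i \<omega>) h \<in> A)
          = cond_prob M (\<lambda>\<omega>. hit_path (\<lambda>i. L i \<omega>) h \<in> A)
              (\<lambda>\<omega>. TV (\<lambda>i. L i \<omega>) {h..} < TV (\<lambda>i. L i \<omega>) {..<0})" if A: "A \<in> sets path_space" for A
  proof -
    have "{\<omega>\<in>space M. TV (\<lambda>i. L i \<omega>) {h..} < TV (\<lambda>i. L i \<omega>) {..<0}} =
      {\<omega>\<in>space M. hit_path (\<lambda>i. L i \<omega>) h \<in> UNIV \<and> TV (\<lambda>i. L i \<omega>) {h..} < TV (\<lambda>i. L i \<omega>) {..<0}}" by simp
    then have d: "\<P>(\<omega> in M. TV (\<lambda>i. L i \<omega>) {h..} < TV (\<lambda>i. L i \<omega>) {..<0}) = c0"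
      unfolding c0_def cc_def hitA by simp
    show ?thesis unfolding cond_prob_def d hitA cc_def[symmetric]
      using P1A[OF A] post_eq[of A] unfolding post_def by simp
  qed
  show ?thesis using indep cond unfolding pre_def post_def by blast
qed

end
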